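(* Let $X_1,\dots,X_n$ be independent random variables with $X_i\sim\mathrm{Bernoulli}(p_i)$, $p_i\in[0,1)$, let $S_n=\sum_{i=1}^n X_i$ and suppose $\lambda=E(S_n)=\sum_{i=1}^n p_i>0$. Then $$D(P_{S_n}\,\|\,\mathrm{Po}(\lambda))\le \frac{1}{\lambda}\sum_{i=1}^n\frac{p_i^3}{1-p_i}.$$
   Context: $P_{S_n}$ is the distribution of $S_n$; $\mathrm{Po}(\lambda)$ is the Poisson distribution with mean $\lambda$. $D(P\|Q)=\sum_x P(x)\log\frac{P(x)}{Q(x)}$ is the relative entropy (natural logarithm, with conventions $0\log(0/a)=0$, $a\log(a/0)=\infty$ for $a>0$). *)

theory Defs
  imports "HOL-Probability.Probability"
begin

definition rel_entropy :: "'a pmf \<Rightarrow> 'a pmf \<Rightarrow> ereal" where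
  "rel_entropy P Q =
     (if \<exists>x. pmf P x > 0 \<and> pmf Q x = 0 then \<infinity>
      else ereal (\<Sum>\<^sub>\<infinity>x\<in>set_pmf P. pmf P x * ln (pmf P x / pmf Q x)))"

definition bernoulli_sum_pmf :: "nat \<Rightarrow> (nat \<Rightarrow> real) \<Rightarrow> nat pmf" where
  "bernoulli_sum_pmf n p =
     map_pmf (\<lambda>X. \<Sum>i<n. of_bool (X i)) (Pi_pmf {..<n} False (\<lambda>i. bernoulli_pmf (p i)))"

end

theory Submission
  imports Defs
begin

lemma logsum2:
  fixes x x' y y' :: real
  assumes "x \<ge> 0" "x' \<ge> 0" "y \<ge> 0" "y' \<ge> 0" "x > 0 \<Longrightarrow> y > 0" "x' > 0 \<Longrightarrow> y' > 0"
  shows "(x + x') * ln ((x + x') / (y + y')) \<le> x * ln (x / y) + x' * ln (x' / y')"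
proof (cases "x + x' = 0")
  case True
  then have "x = 0" "x' = 0" using assms by auto
  then show ?thesis by simp
next
  case False
  define X where "X = x + x'"
  define Y where "Y = y + y'"
  have X: "X > 0" using False assms X_def by auto
  have Y: "Y > 0" using X assms unfolding X_def Y_def
    by (metis add_nonneg_pos add_pos_nonneg order_less_le)
  have key: "x * ln (x / y) \<ge> x * ln (X / Y) + x - y * X / Y"
    if "x \<ge> 0" "y \<ge> 0" "x > 0 \<Longrightarrow> y > 0" for x y
  proof (cases "x = 0")
    case True then show ?thesis using that X Y by simp
  next
    case False
    then have xp: "x > 0" using that by auto
    then have yp: "y > 0" using that by auto
    have "ln ((y * X) / (x * Y)) \<le> (y * X) / (x * Y) - 1"
      using ln_le_minus_one[of "(y * X) / (x * Y)"] xp yp X Y by simp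
    moreover have "ln ((y * X) / (x * Y)) = ln (X / Y) - ln (x / y)"
      using xp yp X Y by (simp add: ln_div ln_mult)
    ultimately have "ln (x / y) \<ge> ln (X / Y) + 1 - (y * X) / (x * Y)" by linarith
    then have "x * ln (x / y) \<ge> x * (ln (X / Y) + 1 - (y * X) / (x * Y))"
      using xp by (simp add: mult_left_mono)
    also have "x * (ln (X / Y) + 1 - (y * X) / (x * Y)) = x * ln (X / Y) + x - y * X / Y"
      using xp Y by (simp add: field_simps)
    finally show ?thesis .
  qed
  have "x * ln (x / y) + x' * ln (x' / y') \<ge> (x * ln (X / Y) + x - y * X / Y) + (x' * ln (X / Y) + x' - y' * X / Y)"
    using key[of x y] key[of x' y'] assms by linarith
  also have "(x * ln (X / Y) + x - y * X / Y) + (x' * ln (X / Y) + x' - y' * X / Y)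
      = X * ln (X / Y) + X - (y + y') * X / Y"
    unfolding X_def by (simp add: algebra_simps add_divide_distrib)
  also have "(y + y') * X / Y = X" using Y unfolding Y_def by simp
  also have "X * ln (X / Y) + X - X = X * ln (X / Y)" by simp
  finally show ?thesis unfolding X_def Y_def .
qed

definition phi :: "real \<Rightarrow> real \<Rightarrow> real \<Rightarrow> real" where
  "phi p a b = a * ln (a / ((1 - p) * (a + b))) + b * ln (b / (p * (a + b)))"

lemma phi_zero[simp]: "phi p 0 0 = 0" by (simp add: phi_def)

lemma phi_hom:
  assumes "c \<ge> 0"
  shows "phi p (c * a) (c * b) = c * phi p a b"
proof (cases "c = 0")
  case True then show ?thesis by (simp add: phi_def)
next
  case False
  have 1: "c * a / ((1 - p) * (c * a + c * b)) = a / ((1 - p) * (a + b))"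
    using False by (simp add: distrib_left[symmetric] mult.left_commute[of _ c])
  have 2: "c * b / (p * (c * a + c * b)) = b / (p * (a + b))"
    using False by (simp add: distrib_left[symmetric] mult.left_commute[of _ c])
  show ?thesis unfolding phi_def 1 2 by (simp add: algebra_simps)
qed

lemma phi_subadd:
  assumes "0 < p" "p < 1" "a \<ge> 0" "b \<ge> 0" "a' \<ge> 0" "b' \<ge> 0"
  shows "phi p (a + a') (b + b') \<le> phi p a b + phi p a' b'"
proof -
  have A: "(a + a') * ln ((a + a') / ((1 - p) * (a + b) + (1 - p) * (a' + b')))
      \<le> a * ln (a / ((1 - p) * (a + b))) + a' * ln (a' / ((1 - p) * (a' + b')))"
    by (rule logsum2) (use assms in auto)
  have B: "(b + b') * ln ((b + b') / (p * (a + b) + p * (a' + b')))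
      \<le> b * ln (b / (p * (a + b))) + b' * ln (b' / (p * (a' + b')))"
    by (rule logsum2) (use assms in auto)
  have e1: "(1 - p) * (a + b) + (1 - p) * (a' + b') = (1 - p) * (a + a' + (b + b'))" by algebra
  have e2: "p * (a + b) + p * (a' + b') = p * (a + a' + (b + b'))" by algebra
  show ?thesis using A B unfolding phi_def e1 e2 by linarith
qed

lemma phi_sum:
  assumes "0 < p" "p < 1" "finite A" "\<And>t. t \<in> A \<Longrightarrow> a t \<ge> 0" "\<And>t. t \<in> A \<Longrightarrow> b t \<ge> 0"
  shows "phi p (\<Sum>t\<in>A. a t) (\<Sum>t\<in>A. b t) \<le> (\<Sum>t\<in>A. phi p (a t) (b t))"
  using assms(3-5)
proof (induction A rule: finite_induct)
  case empty then show ?case by simp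
next
  case (insert x F)
  have "phi p (\<Sum>t\<in>insert x F. a t) (\<Sum>t\<in>insert x F. b t) = phi p (a x + (\<Sum>t\<in>F. a t)) (b x + (\<Sum>t\<in>F. b t))"
    using insert by simp
  also have "\<dots> \<le> phi p (a x) (b x) + phi p (\<Sum>t\<in>F. a t) (\<Sum>t\<in>F. b t)"
    by (rule phi_subadd) (use assms insert in \<open>auto intro: sum_nonneg\<close>)
  also have "\<dots> \<le> phi p (a x) (b x) + (\<Sum>t\<in>F. phi p (a t) (b t))"
    using insert by auto
  finally show ?case using insert by simp
qed

lemma phi_chi2:
  assumes "0 < p" "p < 1" "a \<ge> 0" "b \<ge> 0"
  shows "phi p a b \<le> (b * (1 - p) - a * p)^2 / ((a + b) * p * (1 - p))"
proof (cases "a + b = 0")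
  case True
  then have "a = 0" "b = 0" using assms by auto
  then show ?thesis by (simp add: phi_def)
next
  case False
  then have s: "a + b > 0" using assms by auto
  have t1: "a * ln (a / ((1 - p) * (a + b))) \<le> a * (a / ((1 - p) * (a + b)) - 1)"
  proof (cases "a = 0")
    case False
    then have "a > 0" using assms by auto
    then show ?thesis using ln_le_minus_one[of "a / ((1 - p) * (a + b))"] s assms
      by (intro mult_left_mono) auto
  qed simp
  have t2: "b * ln (b / (p * (a + b))) \<le> b * (b / (p * (a + b)) - 1)"
  proof (cases "b = 0")
    case False
    then have "b > 0" using assms by auto
    then show ?thesis using ln_le_minus_one[of "b / (p * (a + b))"] s assms
      by (intro mult_left_mono) auto
  qed simp
  have "a * (a / ((1 - p) * (a + b)) - 1) + b * (b / (p * (a + b)) - 1)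
      = (b * (1 - p) - a * p)^2 / ((a + b) * p * (1 - p))"
  proof -
    have q: "1 - p > 0" using assms by simp
    have "a * (a / ((1 - p) * (a + b)) - 1) + b * (b / (p * (a + b)) - 1)
        = (a^2 * p + b^2 * (1 - p) - (a + b)^2 * p * (1 - p)) / ((a + b) * p * (1 - p))"
    proof -
      have gen: "a * (a / (q * s) - 1) + b * (b / (p * s) - 1) = (a^2 * p + b^2 * q - s^2 * p * q) / (s * p * q)"
        if "q > 0" "s > 0" "p > 0" "s = a + b" for q s :: real
      proof -
        have "a * (a / (q * s) - 1) + b * (b / (p * s) - 1) = a^2 / (q * s) + b^2 / (p * s) - s"
          using that by (simp add: algebra_simps power2_eq_square)
        also have "\<dots> = (a^2 * p + b^2 * q - s^2 * p * q) / (s * p * q)"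
          using that(1-3) by (simp add: field_simps power2_eq_square)
        finally show ?thesis .
      qed
      show ?thesis using gen[of "1 - p" "a + b"] s q assms by (simp add: mult.commute)
    qed
    also have "a^2 * p + b^2 * (1 - p) - (a + b)^2 * p * (1 - p) = (b * (1 - p) - a * p)^2"
      by (simp add: power2_eq_square algebra_simps)
    finally show ?thesis .
  qed
  then show ?thesis using t1 t2 unfolding phi_def by linarith
qed

definition Bn :: "nat \<Rightarrow> real \<Rightarrow> nat \<Rightarrow> real" where
  "Bn k p x = real (k choose x) * p ^ x * (1 - p) ^ (k - x)"

definition Dk :: "nat \<Rightarrow> real \<Rightarrow> (nat \<Rightarrow> real) \<Rightarrow> real" where
  "Dk k p w = (\<Sum>x\<le>k. w x * ln (w x / ((\<Sum>y\<le>k. w y) * Bn k p x)))"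

definition Rk :: "nat \<Rightarrow> real \<Rightarrow> (nat \<Rightarrow> real) \<Rightarrow> real" where
  "Rk k p w = (\<Sum>t<k. phi p (real (k - t) * w t) (real (Suc t) * w (Suc t)))"

lemma Bn_pos: "0 < p \<Longrightarrow> p < 1 \<Longrightarrow> x \<le> k \<Longrightarrow> Bn k p x > 0"
  unfolding Bn_def by (intro mult_pos_pos) auto

lemma Bn_rec1:
  assumes "t \<le> k'"
  shows "real (Suc k' - t) * Bn (Suc k') p t = real (Suc k') * (1 - p) * Bn k' p t"
proof -
  have "(Suc k' - t) * (Suc k' choose t) = Suc k' * (k' choose t)"
    using binomial_absorb_comp[of "Suc k'" t] by simp
  then have c: "real (Suc k' - t) * real (Suc k' choose t) = real (Suc k') * real (k' choose t)"
    by (metis of_nat_mult)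
  have e: "Suc k' - t = Suc (k' - t)" using assms by simp
  have c': "real (Suc (k' - t)) * real (Suc k' choose t) = real (Suc k') * real (k' choose t)"
    using c unfolding e .
  have "real (Suc k' - t) * Bn (Suc k') p t
      = (real (Suc (k' - t)) * real (Suc k' choose t)) * p ^ t * (1 - p) ^ Suc (k' - t)"
    unfolding Bn_def e by (simp only: mult.assoc)
  also have "\<dots> = real (Suc k') * (1 - p) * (real (k' choose t) * p ^ t * (1 - p) ^ (k' - t))"
    unfolding c' by (simp add: algebra_simps)
  finally show ?thesis unfolding Bn_def .
qed

lemma Bn_rec2:
  shows "real (Suc t) * Bn (Suc k') p (Suc t) = real (Suc k') * p * Bn k' p t"
proof -
  have c: "real (Suc t) * real (Suc k' choose Suc t) = real (Suc k') * real (k' choose t)"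
    using Suc_times_binomial[of t k'] by (metis of_nat_mult)
  have e: "Suc k' - Suc t = k' - t" by simp
  show ?thesis unfolding Bn_def e
  proof -
    have "real (Suc t) * (real (Suc k' choose Suc t) * p ^ Suc t * (1 - p) ^ (k' - t))
        = (real (Suc t) * real (Suc k' choose Suc t)) * p * p ^ t * (1 - p) ^ (k' - t)"
      by (simp add: algebra_simps)
    also have "\<dots> = real (Suc k') * p * (real (k' choose t) * p ^ t * (1 - p) ^ (k' - t))"
      unfolding c by (simp add: algebra_simps)
    finally show "real (Suc t) * (real (Suc k' choose Suc t) * p ^ Suc t * (1 - p) ^ (k' - t)) =
      real (Suc k') * p * (real (k' choose t) * p ^ t * (1 - p) ^ (k' - t))" .
  qed
qed

lemma chain_rule:
  fixes k' :: nat and p :: real and w :: "nat \<Rightarrow> real"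
  assumes p: "0 < p" "p < 1" and w: "\<And>x. w x \<ge> 0"
  defines "\<alpha> \<equiv> (\<lambda>t. real (Suc k' - t) * w t)" and "\<beta> \<equiv> (\<lambda>t. real (Suc t) * w (Suc t))"
  shows "real (Suc k') * Dk (Suc k') p w
       = phi p (\<Sum>t\<le>k'. \<alpha> t) (\<Sum>t\<le>k'. \<beta> t) + Dk k' p \<alpha> + Dk k' p \<beta>"
proof -
  define k where "k = Suc k'"
  define M where "M = (\<Sum>y\<le>k. w y)"
  define Ma where "Ma = (\<Sum>t\<le>k'. \<alpha> t)"
  define Mb where "Mb = (\<Sum>t\<le>k'. \<beta> t)"
  define L where "L = (\<lambda>x. ln (w x / (M * Bn k p x)))"
  have a0: "\<alpha> t \<ge> 0" for t using w unfolding \<alpha>_def by simp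
  have b0: "\<beta> t \<ge> 0" for t using w unfolding \<beta>_def by simp
  have M0: "M \<ge> 0" unfolding M_def using w by (simp add: sum_nonneg)
  have wk: "real k * w x = \<alpha> x + real x * w x" if "x \<le> k" for x
    using that unfolding \<alpha>_def k_def by (simp add: of_nat_diff algebra_simps)
  have "real k * Dk k p w = (\<Sum>x\<le>k. real k * w x * L x)"
    unfolding Dk_def L_def M_def by (simp add: sum_distrib_left mult.assoc)
  also have "\<dots> = (\<Sum>x\<le>k. \<alpha> x * L x) + (\<Sum>x\<le>k. real x * w x * L x)"
    by (simp add: wk sum.distrib[symmetric] distrib_right)
  also have "(\<Sum>x\<le>k. \<alpha> x * L x) = (\<Sum>t\<le>k'. \<alpha> t * L t)"
    unfolding k_def by (simp add: \<alpha>_def)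
  also have "(\<Sum>x\<le>k. real x * w x * L x) = (\<Sum>t\<le>k'. \<beta> t * L (Suc t))"
    unfolding k_def sum.atMost_Suc_shift by (simp add: \<beta>_def)
  finally have S1: "real k * Dk k p w = (\<Sum>t\<le>k'. \<alpha> t * L t) + (\<Sum>t\<le>k'. \<beta> t * L (Suc t))" .
  have tA: "\<alpha> t * L t = \<alpha> t * ln (\<alpha> t / (Ma * Bn k' p t)) + \<alpha> t * ln (Ma / (real k * (1 - p) * M))"
    if "t \<le> k'" for t
  proof (cases "\<alpha> t = 0")
    case False
    then have at: "\<alpha> t > 0" using a0[of t] by simp
    then have wt: "w t > 0" and kt: "Suc k' - t > 0" unfolding \<alpha>_def using w[of t]
      by (auto simp: zero_less_mult_iff)
    have "w t \<le> M" unfolding M_def k_def using that w by (intro member_le_sum) auto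
    then have Mp: "M > 0" using wt by simp
    have "\<alpha> t \<le> Ma" unfolding Ma_def using that a0 by (intro member_le_sum) auto
    then have Map: "Ma > 0" using at by simp
    have Bp: "Bn k' p t > 0" "Bn k p t > 0" using Bn_pos[OF p] that k_def by auto
    have r: "real (Suc k' - t) * Bn k p t = real k * (1 - p) * Bn k' p t"
      unfolding k_def by (rule Bn_rec1[OF that])
    have "w t / (M * Bn k p t) = (\<alpha> t / (Ma * Bn k' p t)) * (Ma / (real k * (1 - p) * M))"
    proof -
      have "(\<alpha> t / (Ma * Bn k' p t)) * (Ma / (real k * (1 - p) * M))
          = real (Suc k' - t) * w t / (M * (real k * (1 - p) * Bn k' p t))"
        unfolding \<alpha>_def using Map Bp p Mp by (simp add: field_simps k_def)
      also have "\<dots> = real (Suc k' - t) * w t / (M * (real (Suc k' - t) * Bn k p t))"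
        unfolding r ..
      also have "\<dots> = w t / (M * Bn k p t)" using kt by simp
      finally show ?thesis by simp
    qed
    then have "L t = ln (\<alpha> t / (Ma * Bn k' p t)) + ln (Ma / (real k * (1 - p) * M))"
    proof -
      have A: "\<alpha> t / (Ma * Bn k' p t) > 0" using at Map Bp by simp
      have B: "Ma / (real k * (1 - p) * M) > 0" using Map p Mp k_def by simp
      show ?thesis unfolding L_def \<open>w t / (M * Bn k p t) = _\<close> using ln_mult_pos[OF A B] by simp
    qed
    then show ?thesis by (simp add: distrib_left)
  qed simp
  have tB: "\<beta> t * L (Suc t) = \<beta> t * ln (\<beta> t / (Mb * Bn k' p t)) + \<beta> t * ln (Mb / (real k * p * M))"
    if "t \<le> k'" for t
  proof (cases "\<beta> t = 0")
    case False
    then have bt: "\<beta> t > 0" using b0[of t] by simp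
    then have wt: "w (Suc t) > 0" unfolding \<beta>_def using w[of "Suc t"]
      by (auto simp: zero_less_mult_iff)
    have "w (Suc t) \<le> M" unfolding M_def k_def using that w by (intro member_le_sum) auto
    then have Mp: "M > 0" using wt by simp
    have "\<beta> t \<le> Mb" unfolding Mb_def using that b0 by (intro member_le_sum) auto
    then have Mbp: "Mb > 0" using bt by simp
    have Bp: "Bn k' p t > 0" using Bn_pos[OF p] that by auto
    have r: "real (Suc t) * Bn k p (Suc t) = real k * p * Bn k' p t"
      unfolding k_def by (rule Bn_rec2)
    have "w (Suc t) / (M * Bn k p (Suc t)) = (\<beta> t / (Mb * Bn k' p t)) * (Mb / (real k * p * M))"
    proof -
      have "(\<beta> t / (Mb * Bn k' p t)) * (Mb / (real k * p * M))
          = real (Suc t) * w (Suc t) / (M * (real k * p * Bn k' p t))"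
        unfolding \<beta>_def using Mbp Bp p Mp k_def by (simp add: divide_simps)
      also have "\<dots> = real (Suc t) * w (Suc t) / (M * (real (Suc t) * Bn k p (Suc t)))"
        unfolding r ..
      also have "\<dots> = w (Suc t) / (M * Bn k p (Suc t))" by simp
      finally show ?thesis by simp
    qed
    then have "L (Suc t) = ln (\<beta> t / (Mb * Bn k' p t)) + ln (Mb / (real k * p * M))"
    proof -
      have A: "\<beta> t / (Mb * Bn k' p t) > 0" using bt Mbp Bp by simp
      have B: "Mb / (real k * p * M) > 0" using Mbp p Mp k_def by simp
      show ?thesis unfolding L_def \<open>w (Suc t) / (M * Bn k p (Suc t)) = _\<close> using ln_mult_pos[OF A B] by simp
    qed
    then show ?thesis by (simp add: distrib_left)
  qed simp
  have MM: "Ma + Mb = real k * M"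
  proof -
    have "real k * M = (\<Sum>x\<le>k. real k * w x)" unfolding M_def by (simp add: sum_distrib_left)
    also have "\<dots> = (\<Sum>x\<le>k. \<alpha> x) + (\<Sum>x\<le>k. real x * w x)"
      by (simp add: wk sum.distrib)
    also have "(\<Sum>x\<le>k. \<alpha> x) = Ma" unfolding Ma_def k_def by (simp add: \<alpha>_def)
    also have "(\<Sum>x\<le>k. real x * w x) = Mb"
      unfolding Mb_def k_def sum.atMost_Suc_shift by (simp add: \<beta>_def)
    finally show ?thesis by simp
  qed
  have "real k * Dk k p w = (\<Sum>t\<le>k'. \<alpha> t * ln (\<alpha> t / (Ma * Bn k' p t))) + Ma * ln (Ma / (real k * (1 - p) * M))
      + ((\<Sum>t\<le>k'. \<beta> t * ln (\<beta> t / (Mb * Bn k' p t))) + Mb * ln (Mb / (real k * p * M)))"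
    unfolding S1 by (simp add: tA tB sum.distrib Ma_def Mb_def sum_distrib_right)
  also have "(\<Sum>t\<le>k'. \<alpha> t * ln (\<alpha> t / (Ma * Bn k' p t))) = Dk k' p \<alpha>"
    unfolding Dk_def Ma_def ..
  also have "(\<Sum>t\<le>k'. \<beta> t * ln (\<beta> t / (Mb * Bn k' p t))) = Dk k' p \<beta>"
    unfolding Dk_def Mb_def ..
  finally have F: "real k * Dk k p w = Dk k' p \<alpha> + Dk k' p \<beta> + (Ma * ln (Ma / (real k * (1 - p) * M)) + Mb * ln (Mb / (real k * p * M)))"
    by simp
  have "Ma * ln (Ma / (real k * (1 - p) * M)) + Mb * ln (Mb / (real k * p * M)) = phi p Ma Mb"
    unfolding phi_def MM by (simp add: mult_ac)
  with F have "real k * Dk k p w = phi p Ma Mb + Dk k' p \<alpha> + Dk k' p \<beta>" by simp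
  then show ?thesis unfolding k_def Ma_def Mb_def by simp
qed


lemma Rk_rel:
  fixes k' :: nat and p :: real and w :: "nat \<Rightarrow> real"
  defines "\<alpha> \<equiv> (\<lambda>t. real (Suc k' - t) * w t)" and "\<beta> \<equiv> (\<lambda>t. real (Suc t) * w (Suc t))"
  shows "Rk k' p \<alpha> + Rk k' p \<beta> = real k' * Rk (Suc k') p w"
proof -
  define f where "f = (\<lambda>t. phi p (\<alpha> t) (\<beta> t))"
  have R: "Rk (Suc k') p w = (\<Sum>t<Suc k'. f t)"
    unfolding Rk_def f_def \<alpha>_def \<beta>_def ..
  have 1: "Rk k' p \<alpha> = (\<Sum>t<k'. real (k' - t) * f t)"
    unfolding Rk_def
  proof (rule sum.cong[OF refl])
    fix t assume "t \<in> {..<k'}"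
    then have t: "t < k'" by simp
    have e: "real (Suc t) * \<alpha> (Suc t) = real (k' - t) * \<beta> t"
      unfolding \<alpha>_def \<beta>_def using t by (simp add: algebra_simps)
    show "phi p (real (k' - t) * \<alpha> t) (real (Suc t) * \<alpha> (Suc t)) = real (k' - t) * f t"
      unfolding e f_def by (rule phi_hom) simp
  qed
  have 2: "Rk k' p \<beta> = (\<Sum>t<k'. real (Suc t) * f (Suc t))"
    unfolding Rk_def
  proof (rule sum.cong[OF refl])
    fix t assume "t \<in> {..<k'}"
    then have t: "t < k'" by simp
    have e: "real (k' - t) * \<beta> t = real (Suc t) * \<alpha> (Suc t)"
      unfolding \<alpha>_def \<beta>_def using t by (simp add: algebra_simps)
    show "phi p (real (k' - t) * \<beta> t) (real (Suc t) * \<beta> (Suc t)) = real (Suc t) * f (Suc t)"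
      unfolding e f_def by (rule phi_hom) simp
  qed
  have "real k' * (\<Sum>t<Suc k'. f t) = (\<Sum>t<Suc k'. real (k' - t) * f t) + (\<Sum>t<Suc k'. real t * f t)"
    by (simp add: sum_distrib_left sum.distrib[symmetric] of_nat_diff algebra_simps)
  also have "(\<Sum>t<Suc k'. real (k' - t) * f t) = (\<Sum>t<k'. real (k' - t) * f t)" by simp
  also have "(\<Sum>t<Suc k'. real t * f t) = (\<Sum>t<k'. real (Suc t) * f (Suc t))"
    unfolding sum.lessThan_Suc_shift by simp
  finally show ?thesis using 1 2 R by simp
qed

lemma binom_mlsi:
  assumes p: "0 < p" "p < 1" and w: "\<And>x. w x \<ge> 0"
  shows "Dk k p w \<le> Rk k p w"
  using w
proof (induction k arbitrary: w)
  case 0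
  show ?case unfolding Dk_def Rk_def Bn_def by simp
next
  case (Suc k')
  define \<alpha> where "\<alpha> = (\<lambda>t. real (Suc k' - t) * w t)"
  define \<beta> where "\<beta> = (\<lambda>t. real (Suc t) * w (Suc t))"
  have a0: "\<alpha> t \<ge> 0" for t using Suc.prems unfolding \<alpha>_def by simp
  have b0: "\<beta> t \<ge> 0" for t using Suc.prems unfolding \<beta>_def by simp
  have "real (Suc k') * Dk (Suc k') p w = phi p (\<Sum>t\<le>k'. \<alpha> t) (\<Sum>t\<le>k'. \<beta> t) + Dk k' p \<alpha> + Dk k' p \<beta>"
    unfolding \<alpha>_def \<beta>_def by (rule chain_rule[OF p Suc.prems])
  also have "\<dots> \<le> (\<Sum>t\<le>k'. phi p (\<alpha> t) (\<beta> t)) + Rk k' p \<alpha> + Rk k' p \<beta>"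
    using phi_sum[OF p, of "{..k'}" \<alpha> \<beta>] a0 b0 Suc.IH[of \<alpha>] Suc.IH[of \<beta>] by force
  also have "(\<Sum>t\<le>k'. phi p (\<alpha> t) (\<beta> t)) = Rk (Suc k') p w"
    unfolding Rk_def \<alpha>_def \<beta>_def lessThan_Suc_atMost ..
  also have "Rk (Suc k') p w + Rk k' p \<alpha> + Rk k' p \<beta> = real (Suc k') * Rk (Suc k') p w"
    using Rk_rel[of k' p w] unfolding \<alpha>_def \<beta>_def by (simp add: algebra_simps)
  finally show ?case by simp
qed

lemma Bn_ratio:
  assumes "x < k"
  shows "Bn k p (Suc x) * real (Suc x) * (1 - p) = Bn k p x * real (k - x) * p"
proof -
  have c: "Suc x * (k choose Suc x) = (k - x) * (k choose x)"
    using binomial_absorption[of x k] binomial_absorb_comp[of k x] by simp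
  then have c': "real (Suc x) * real (k choose Suc x) = real (k - x) * real (k choose x)"
    by (metis of_nat_mult)
  have e: "k - x = Suc (k - Suc x)" using assms by simp
  have "Bn k p (Suc x) * real (Suc x) * (1 - p)
      = (real (Suc x) * real (k choose Suc x)) * p * p ^ x * (1 - p) ^ Suc (k - Suc x)"
    unfolding Bn_def by (simp add: algebra_simps)
  also have "\<dots> = (real (k - x) * real (k choose x)) * p * p ^ x * (1 - p) ^ (k - x)"
    unfolding c' e[symmetric] ..
  also have "\<dots> = Bn k p x * real (k - x) * p" unfolding Bn_def by (simp add: algebra_simps)
  finally show ?thesis .
qed

lemma poisson_limit:
  fixes l :: real
  assumes l: "l > 0"
  shows "(\<lambda>k. Bn k (l / real k) x) \<longlonglongrightarrow> l ^ x / fact x * exp (-l)"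
proof (induction x)
  case 0
  have "(\<lambda>k. (1 + (-l) / real k) ^ k) \<longlonglongrightarrow> exp (-l)" by (rule tendsto_exp_limit_sequentially)
  moreover have "Bn k (l / real k) 0 = (1 + (-l) / real k) ^ k" for k
    unfolding Bn_def by simp
  ultimately show ?case by simp
next
  case (Suc x)
  have ev: "eventually (\<lambda>k. Bn k (l / real k) x * ((1 - real x * (1 / real k)) * l / ((1 - l * (1 / real k)) * real (Suc x)))
       = Bn k (l / real k) (Suc x)) sequentially"
  proof -
    obtain N :: nat where N: "real N > l" using reals_Archimedean2 by blast
    show ?thesis unfolding eventually_sequentially
    proof (intro exI[of _ "max N (Suc x)"] allI impI)
      fix k assume k: "k \<ge> max N (Suc x)"
      then have kx: "x < k" and kl: "real k > l" using N by auto
      then have k0: "real k > 0" by simp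
      have q: "1 - l / real k > 0" using kl k0 by (simp add: field_simps)
      have r: "Bn k (l / real k) (Suc x) * real (Suc x) * (1 - l / real k) = Bn k (l / real k) x * real (k - x) * (l / real k)"
        by (rule Bn_ratio[OF kx])
      define p where "p = l / real k"
      have q': "1 - p > 0" using q p_def by simp
      have rk: "real (k - x) = real k - real x" using kx by (simp add: of_nat_diff)
      have r': "Bn k p (Suc x) * (real (Suc x) * (1 - p)) = Bn k p x * real (k - x) * p"
        using r unfolding p_def by (simp add: mult.assoc)
      have d: "real (Suc x) * (1 - p) \<noteq> 0" using q' by simp
      have e1: "real (k - x) * p = (1 - real x * (1 / real k)) * l"
        unfolding rk p_def using k0 by (simp add: divide_simps)
      have e2: "1 - p = 1 - l * (1 / real k)" unfolding p_def by simp
      have "Bn k p (Suc x) = Bn k p x * (real (k - x) * p) / (real (Suc x) * (1 - p))"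
        using r' d by (simp add: eq_divide_eq mult.assoc)
      also have "\<dots> = Bn k p x * ((1 - real x * (1 / real k)) * l / ((1 - l * (1 / real k)) * real (Suc x)))"
        unfolding e1 e2 by (simp add: mult.commute)
      finally show "Bn k (l / real k) x * ((1 - real x * (1 / real k)) * l / ((1 - l * (1 / real k)) * real (Suc x))) = Bn k (l / real k) (Suc x)"
        unfolding p_def by simp
    qed
  qed
  have lim: "(\<lambda>k. Bn k (l / real k) x * ((1 - real x * (1 / real k)) * l / ((1 - l * (1 / real k)) * real (Suc x))))
      \<longlonglongrightarrow> l ^ x / fact x * exp (-l) * ((1 - real x * 0) * l / ((1 - l * 0) * real (Suc x)))"
    by (intro tendsto_intros Suc.IH lim_inverse_n') auto
  have "l ^ x / fact x * exp (-l) * ((1 - real x * 0) * l / ((1 - l * 0) * real (Suc x))) = l ^ Suc x / fact (Suc x) * exp (-l)"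
    by (simp add: field_simps)
  then show ?case using Lim_transform_eventually[OF lim ev] by simp
qed


lemma poisson_mlsi:
  fixes w :: "nat \<Rightarrow> real" and l :: real and m :: nat
  assumes l: "l > 0" and w: "\<And>x. w x \<ge> 0" and wm: "\<And>x. x > m \<Longrightarrow> w x = 0"
    and w1: "(\<Sum>x\<le>m. w x) = 1" and wz: "\<And>x. w x = 0 \<Longrightarrow> w (Suc x) = 0"
  shows "(\<Sum>x\<le>m. w x * ln (w x / (l ^ x / fact x * exp (-l))))
         \<le> (\<Sum>t\<le>m. (real (Suc t) * w (Suc t) - l * w t)^2 / (l * w t))"
proof -
  define b where "b = (\<lambda>t. real (Suc t) * w (Suc t))"
  define Cf where "Cf = (\<lambda>t e. (b t * (1 - l * e) - (1 - real t * e) * l * w t)^2 /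
                          (((1 - real t * e) * l * w t + b t * l * e) * (1 - l * e)))"
  define A where "A = (\<lambda>k. \<Sum>x\<le>m. w x * ln (w x / Bn k (l / real k) x))"
  define C where "C = (\<lambda>k::nat. \<Sum>t\<le>m. Cf t (1 / real k))"
  have ev: "eventually (\<lambda>k. A k \<le> C k) sequentially"
  proof -
    obtain N :: nat where N: "real N > l" using reals_Archimedean2 by blast
    show ?thesis unfolding eventually_sequentially
    proof (intro exI[of _ "max N (Suc m)"] allI impI)
      fix k assume k: "k \<ge> max N (Suc m)"
      then have km: "m < k" and kl: "real k > l" using N by auto
      then have k0: "real k > 0" by simp
      define p where "p = l / real k"
      have p: "0 < p" "p < 1" unfolding p_def using l kl k0 by (auto simp: field_simps)
      have sumk: "(\<Sum>x\<le>k. f x) = (\<Sum>x\<le>m. f x)" if "\<And>x. x > m \<Longrightarrow> f x = 0" for f :: "nat \<Rightarrow> real"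
        by (rule sum.mono_neutral_right) (use km that in auto)
      have "Dk k p w = A k"
        unfolding Dk_def A_def p_def
        by (subst sumk, simp add: wm)+ (simp add: w1)
      moreover have "Dk k p w \<le> Rk k p w" by (rule binom_mlsi[OF p w])
      moreover have "Rk k p w \<le> (\<Sum>t<k. (real (Suc t) * w (Suc t) * (1 - p) - real (k - t) * w t * p)^2 /
              ((real (k - t) * w t + real (Suc t) * w (Suc t)) * p * (1 - p)))"
        unfolding Rk_def by (intro sum_mono phi_chi2 p) (use w in auto)
      moreover have "\<dots> = (\<Sum>t\<le>m. (real (Suc t) * w (Suc t) * (1 - p) - real (k - t) * w t * p)^2 /
              ((real (k - t) * w t + real (Suc t) * w (Suc t)) * p * (1 - p)))"
        by (rule sum.mono_neutral_right) (use km wm in auto)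
      moreover have "\<dots> = C k"
        unfolding C_def
      proof (rule sum.cong[OF refl])
        fix t assume "t \<in> {..m}"
        then have tk: "t \<le> k" using km by simp
        have e1: "real (k - t) * w t * p = (1 - real t * (1 / real k)) * l * w t"
          unfolding p_def using k0 tk by (simp add: of_nat_diff divide_simps)
        have e2: "(real (k - t) * w t + b t) * p
                 = (1 - real t * (1 / real k)) * l * w t + b t * l * (1 / real k)"
          unfolding p_def b_def using k0 tk by (simp add: of_nat_diff divide_simps) (simp add: algebra_simps)
        have e3: "1 - p = 1 - l * (1 / real k)" unfolding p_def by simp
        have "(real (Suc t) * w (Suc t) * (1 - p) - real (k - t) * w t * p)^2 /
              ((real (k - t) * w t + real (Suc t) * w (Suc t)) * p * (1 - p))
            = (b t * (1 - p) - real (k - t) * w t * p)^2 / (((real (k - t) * w t + b t) * p) * (1 - p))"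
          unfolding b_def by simp
        also have "\<dots> = Cf t (1 / real k)"
          unfolding e1 e2 e3 Cf_def ..
        finally show "(real (Suc t) * w (Suc t) * (1 - p) - real (k - t) * w t * p)^2 /
              ((real (k - t) * w t + real (Suc t) * w (Suc t)) * p * (1 - p)) = Cf t (1 / real k)" .
      qed
      ultimately show "A k \<le> C k" by linarith
    qed
  qed
  have limA: "A \<longlonglongrightarrow> (\<Sum>x\<le>m. w x * ln (w x / (l ^ x / fact x * exp (-l))))"
    unfolding A_def
  proof (intro tendsto_sum)
    fix x assume "x \<in> {..m}"
    show "(\<lambda>k. w x * ln (w x / Bn k (l / real k) x)) \<longlonglongrightarrow> w x * ln (w x / (l ^ x / fact x * exp (-l)))"
    proof (cases "w x = 0")
      case False
      then have wx: "w x > 0" using w[of x] by simp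
      have po: "l ^ x / fact x * exp (-l) > 0" using l by simp
      show ?thesis
        by (intro tendsto_intros poisson_limit l) (use wx po l in auto)
    qed simp
  qed
  have limC: "C \<longlonglongrightarrow> (\<Sum>t\<le>m. (real (Suc t) * w (Suc t) - l * w t)^2 / (l * w t))"
    unfolding C_def
  proof (intro tendsto_sum)
    fix t assume "t \<in> {..m}"
    show "(\<lambda>k. Cf t (1 / real k)) \<longlonglongrightarrow> (real (Suc t) * w (Suc t) - l * w t)^2 / (l * w t)"
    proof (cases "w t = 0")
      case True
      then have "w (Suc t) = 0" by (rule wz)
      then show ?thesis using True unfolding Cf_def b_def by simp
    next
      case False
      then have wt: "w t > 0" using w[of t] by simp
      have "(\<lambda>k. Cf t (1 / real k)) \<longlonglongrightarrow> Cf t 0"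
        unfolding Cf_def by (intro tendsto_intros lim_inverse_n') (use wt l in auto)
      moreover have "Cf t 0 = (real (Suc t) * w (Suc t) - l * w t)^2 / (l * w t)"
        unfolding Cf_def b_def by simp
      ultimately show ?thesis by simp
    qed
  qed
  show ?thesis using tendsto_le[OF _ limC limA ev] by simp
qed

primrec qq :: "(nat \<Rightarrow> real) \<Rightarrow> nat \<Rightarrow> nat \<Rightarrow> real" where
  "qq p 0 x = (if x = 0 then 1 else 0)"
| "qq p (Suc k) x = (1 - p k) * qq p k x + (case x of 0 \<Rightarrow> 0 | Suc y \<Rightarrow> p k * qq p k y)"

lemma bsum_Suc:
  "bernoulli_sum_pmf (Suc k) p =
     bind_pmf (bernoulli_pmf (p k)) (\<lambda>y. map_pmf (\<lambda>s. of_bool y + s) (bernoulli_sum_pmf k p))"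
proof -
  define P where "P = (\<lambda>i. bernoulli_pmf (p i))"
  have pi: "Pi_pmf {..<Suc k} False P =
      do {y \<leftarrow> P k; f \<leftarrow> Pi_pmf {..<k} False P; return_pmf (f(k := y))}"
    unfolding lessThan_Suc by (rule Pi_pmf_insert') auto
  have g: "(\<Sum>i<Suc k. of_bool ((f(k := y)) i)) = of_bool y + (\<Sum>i<k. of_bool (f i))" for f and y :: bool
    by (simp add: sum.lessThan_Suc add.commute)
  show ?thesis
    unfolding bernoulli_sum_pmf_def P_def[symmetric] pi
    by (simp only: map_bind_pmf map_return_pmf g map_pmf_comp map_pmf_def[of "\<lambda>f. of_bool _ + (\<Sum>i<k. of_bool (f i))"] P_def)
qed

lemma pmf_bsum:
  assumes "\<And>i. i < k \<Longrightarrow> 0 \<le> p i \<and> p i \<le> 1"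
  shows "pmf (bernoulli_sum_pmf k p) x = qq p k x"
  using assms
proof (induction k arbitrary: x)
  case 0
  have "bernoulli_sum_pmf 0 p = return_pmf 0"
    unfolding bernoulli_sum_pmf_def by simp
  then show ?case by (simp add: indicator_def)
next
  case (Suc k)
  have pk: "0 \<le> p k" "p k \<le> 1" using Suc.prems by auto
  have IH: "pmf (bernoulli_sum_pmf k p) y = qq p k y" for y
    using Suc.IH Suc.prems by auto
  have m0: "map_pmf (\<lambda>s. of_bool False + s) M = M" for M :: "nat pmf" by (simp add: pmf.map_id0[unfolded id_def])
  have m1: "pmf (map_pmf (\<lambda>s. of_bool True + s) M) x = (case x of 0 \<Rightarrow> 0 | Suc y \<Rightarrow> pmf M y)" for M :: "nat pmf"
  proof (cases x)
    case 0
    then show ?thesis by (intro trans[OF pmf_map_outside]) auto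
  next
    case (Suc y)
    have "pmf (map_pmf Suc M) (Suc y) = pmf M y" by (rule pmf_map_inj') (simp add: inj_def)
    then show ?thesis using Suc by simp
  qed
  define B where "B = bernoulli_sum_pmf k p"
  have "pmf (bernoulli_sum_pmf (Suc k) p) x
      = pmf (map_pmf (\<lambda>s. of_bool True + s) B) x * p k + pmf (map_pmf (\<lambda>s. of_bool False + s) B) x * (1 - p k)"
    unfolding bsum_Suc pmf_bind B_def by (rule integral_bernoulli_pmf) (use pk in auto)
  also have "\<dots> = (case x of 0 \<Rightarrow> 0 | Suc y \<Rightarrow> qq p k y) * p k + qq p k x * (1 - p k)"
    unfolding m0 m1 B_def IH ..
  also have "\<dots> = qq p (Suc k) x" by (simp split: nat.split)
  finally show ?case .
qed


context
  fixes p :: "nat \<Rightarrow> real" and n :: nat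
  assumes pr: "\<And>i. i < n \<Longrightarrow> 0 \<le> p i \<and> p i < 1"
begin

lemma qq_nonneg: "k \<le> n \<Longrightarrow> qq p k x \<ge> 0"
proof (induction k arbitrary: x)
  case (Suc k)
  have "0 \<le> p k" "p k < 1" using pr Suc.prems by auto
  then show ?case using Suc by (auto split: nat.split intro!: add_nonneg_nonneg mult_nonneg_nonneg)
qed simp

lemma qq_above: "x > k \<Longrightarrow> qq p k x = 0"
proof (induction k arbitrary: x)
  case (Suc k)
  then show ?case by (auto split: nat.split)
qed simp

lemma qq_down: "k \<le> n \<Longrightarrow> qq p k x = 0 \<Longrightarrow> qq p k (Suc x) = 0"
proof (induction k arbitrary: x)
  case (Suc k)
  have pk: "0 \<le> p k" "p k < 1" using pr Suc.prems by auto
  have nn: "qq p k y \<ge> 0" for y using qq_nonneg Suc.prems by simp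
  have A: "(1 - p k) * qq p k x \<ge> 0" using pk nn by simp
  have B: "(case x of 0 \<Rightarrow> 0 | Suc y \<Rightarrow> p k * qq p k y) \<ge> 0" using pk nn by (simp split: nat.split)
  have S: "(1 - p k) * qq p k x + (case x of 0 \<Rightarrow> 0 | Suc y \<Rightarrow> p k * qq p k y) = 0"
    using Suc.prems(2) by simp
  have "(1 - p k) * qq p k x = 0" using S A B by linarith
  then have "qq p k x = 0" using pk by simp
  then have "qq p k (Suc x) = 0" using Suc.IH Suc.prems by simp
  then show ?case using \<open>qq p k x = 0\<close> by simp
qed simp

lemma qq_sum: "k \<le> n \<Longrightarrow> (\<Sum>x\<le>k. qq p k x) = 1"
proof (induction k)
  case (Suc k)
  have "(\<Sum>x\<le>Suc k. qq p (Suc k) x) = (1 - p k) * (\<Sum>x\<le>Suc k. qq p k x) + (\<Sum>x\<le>Suc k. (case x of 0 \<Rightarrow> 0 | Suc y \<Rightarrow> p k * qq p k y))"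
    by (simp add: sum.distrib sum_distrib_left distrib_left)
  also have "(\<Sum>x\<le>Suc k. qq p k x) = 1" using Suc by (simp add: qq_above)
  also have "(\<Sum>x\<le>Suc k. (case x of 0 \<Rightarrow> 0 | Suc y \<Rightarrow> p k * qq p k y)) = p k * (\<Sum>y\<le>k. qq p k y)"
    unfolding sum.atMost_Suc_shift by (simp add: sum_distrib_left)
  finally show ?case using Suc by simp
qed simp

definition NN :: "nat \<Rightarrow> nat \<Rightarrow> real" where
  "NN k x = real (Suc x) * qq p k (Suc x) - (\<Sum>i<k. p i) * qq p k x"

definition JJ :: "nat \<Rightarrow> real" where
  "JJ k = (\<Sum>x\<le>k. (NN k x)^2 / qq p k x)"

lemma cs2:
  fixes A B x y :: real
  assumes "A \<ge> 0" "B \<ge> 0"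
  shows "(A * x + B * y)^2 / (A + B) \<le> A * x^2 + B * y^2"
proof (cases "A + B = 0")
  case True
  then show ?thesis using assms by (simp add: add_nonneg_nonneg)
next
  case False
  then have s: "A + B > 0" using assms by simp
  have "(A * x + B * y)^2 \<le> (A + B) * (A * x^2 + B * y^2)"
  proof -
    have "(A + B) * (A * x^2 + B * y^2) - (A * x + B * y)^2 = A * B * (x - y)^2"
      by (simp add: power2_eq_square algebra_simps)
    moreover have "A * B * (x - y)^2 \<ge> 0" using assms by simp
    ultimately show ?thesis by linarith
  qed
  then show ?thesis using s by (simp add: divide_simps mult.commute)
qed

lemma JJ_step:
  assumes k: "Suc k \<le> n"
  shows "JJ (Suc k) \<le> JJ k + p k ^ 3 / (1 - p k)"
proof -
  define a where "a = p k"
  have a: "0 \<le> a" "a < 1" using pr k unfolding a_def by auto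
  define Q where "Q = qq p k"
  define L where "L = (\<Sum>i<k. p i)"
  define u where "u = (\<lambda>x. NN k x / Q x)"
  define v0 where "v0 = a^2 / (1 - a)"
  define v1 where "v1 = - a"
  have kn: "k \<le> n" using k by simp
  have Q0: "Q x \<ge> 0" for x unfolding Q_def using qq_nonneg kn by simp
  have Qu: "Q x * u x = NN k x" for x
  proof (cases "Q x = 0")
    case True
    then have "Q (Suc x) = 0" unfolding Q_def using qq_down kn by simp
    then show ?thesis using True unfolding u_def NN_def Q_def by simp
  qed (simp add: u_def)
  have Q': "qq p (Suc k) z = (1 - a) * Q z + (case z of 0 \<Rightarrow> 0 | Suc y \<Rightarrow> a * Q y)" for z
    unfolding Q_def a_def by simp
  have N': "NN (Suc k) z = (1 - a) * Q z * (u z + v0) + (case z of 0 \<Rightarrow> 0 | Suc y \<Rightarrow> a * Q y * (u y + v1))" for z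
  proof -
    have R: "(1 - a) * Q z * (u z + v0) + (case z of 0 \<Rightarrow> 0 | Suc y \<Rightarrow> a * Q y * (u y + v1))
        = (1 - a) * NN k z + a^2 * Q z + (case z of 0 \<Rightarrow> 0 | Suc y \<Rightarrow> a * NN k y - a^2 * Q y)"
    proof -
      have "(1 - a) * Q z * (u z + v0) = (1 - a) * (Q z * u z) + a^2 * Q z"
        unfolding v0_def using a by (simp add: field_simps)
      moreover have "a * Q y * (u y + v1) = a * (Q y * u y) - a^2 * Q y" for y
        unfolding v1_def by (simp add: algebra_simps power2_eq_square)
      ultimately show ?thesis unfolding Qu by (simp split: nat.split)
    qed
    have Lk: "(\<Sum>i<Suc k. p i) = L + a" unfolding L_def a_def by simp
    show ?thesis unfolding R
      unfolding NN_def Lk Q' L_def[symmetric] Q_def[symmetric]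
      by (cases z) (simp_all add: algebra_simps power2_eq_square)
  qed
  have trm: "(NN (Suc k) z)^2 / qq p (Suc k) z
      \<le> (1 - a) * Q z * (u z + v0)^2 + (case z of 0 \<Rightarrow> 0 | Suc y \<Rightarrow> a * Q y * (u y + v1)^2)" for z
  proof (cases z)
    case 0
    have "(NN (Suc k) z)^2 / qq p (Suc k) z = ((1 - a) * Q z * (u z + v0) + 0 * 0)^2 / ((1 - a) * Q z + 0)"
      unfolding N' Q' using 0 by simp
    also have "\<dots> \<le> (1 - a) * Q z * (u z + v0)^2 + 0 * 0^2"
      by (rule cs2) (use a Q0 in auto)
    finally show ?thesis using 0 by simp
  next
    case (Suc y)
    have "(NN (Suc k) z)^2 / qq p (Suc k) z = ((1 - a) * Q z * (u z + v0) + (a * Q y) * (u y + v1))^2 / ((1 - a) * Q z + a * Q y)"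
      unfolding N' Q' using Suc by (simp add: mult.assoc)
    also have "\<dots> \<le> (1 - a) * Q z * (u z + v0)^2 + (a * Q y) * (u y + v1)^2"
      by (rule cs2) (use a Q0 in auto)
    finally show ?thesis using Suc by simp
  qed
  have "JJ (Suc k) \<le> (\<Sum>z\<le>Suc k. (1 - a) * Q z * (u z + v0)^2 + (case z of 0 \<Rightarrow> 0 | Suc y \<Rightarrow> a * Q y * (u y + v1)^2))"
    unfolding JJ_def by (intro sum_mono trm)
  also have "\<dots> = (\<Sum>z\<le>Suc k. (1 - a) * Q z * (u z + v0)^2) + (\<Sum>y\<le>k. a * Q y * (u y + v1)^2)"
    unfolding sum.distrib sum.atMost_Suc_shift[of "\<lambda>z. case z of 0 \<Rightarrow> 0 | Suc y \<Rightarrow> _ y"] by simp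
  also have "(\<Sum>z\<le>Suc k. (1 - a) * Q z * (u z + v0)^2) = (\<Sum>z\<le>k. (1 - a) * Q z * (u z + v0)^2)"
    unfolding Q_def by (simp add: qq_above)
  also have "(\<Sum>z\<le>k. (1 - a) * Q z * (u z + v0)^2) + (\<Sum>y\<le>k. a * Q y * (u y + v1)^2)
      = (\<Sum>x\<le>k. (NN k x)^2 / Q x + Q x * (a^3 / (1 - a)))"
    unfolding sum.distrib[symmetric]
  proof (rule sum.cong[OF refl])
    fix x
    have id: "(1 - a) * (u x + v0)^2 + a * (u x + v1)^2 = (u x)^2 + a^3 / (1 - a)"
    proof -
      have b: "1 - a > 0" using a by simp
      have gen: "B * (U + C / B)^2 = B * U^2 + 2 * C * U + C * (C / B)" if "B \<noteq> 0" for B U C :: real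
      proof -
        have "B * (U + C / B)^2 = B * U^2 + 2 * U * (B * (C / B)) + (B * (C / B)) * (C / B)"
          by (simp add: power2_eq_square algebra_simps)
        also have "B * (C / B) = C" using that by simp
        finally show ?thesis by simp
      qed
      have "(1 - a) * (u x + a^2 / (1 - a))^2 = (1 - a) * (u x)^2 + 2 * a^2 * u x + a^2 * (a^2 / (1 - a))"
        using gen[of "1 - a" "u x" "a^2"] b by simp
      moreover have "a * (u x + - a)^2 = a * (u x)^2 - 2 * a^2 * u x + a^3"
        by (simp add: power2_eq_square power3_eq_cube algebra_simps)
      moreover have "a^2 * (a^2 / (1 - a)) + a^3 = a^3 / (1 - a)"
        using b by (simp add: power2_eq_square power3_eq_cube field_simps)
      ultimately show ?thesis unfolding v0_def v1_def by (simp add: algebra_simps)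
    qed
    have "Q x * (u x)^2 = (NN k x)^2 / Q x"
      by (cases "Q x = 0") (simp_all add: u_def power2_eq_square)
    then show "(1 - a) * Q x * (u x + v0)^2 + a * Q x * (u x + v1)^2 = (NN k x)^2 / Q x + Q x * (a^3 / (1 - a))"
      using id by (metis (no_types, lifting) distrib_left mult.assoc mult.left_commute)
  qed
  also have "\<dots> = JJ k + a^3 / (1 - a)"
    unfolding sum.distrib JJ_def Q_def sum_distrib_right[symmetric] using qq_sum kn by simp
  finally show ?thesis unfolding a_def .
qed

lemma JJ_bound: "k \<le> n \<Longrightarrow> JJ k \<le> (\<Sum>i<k. p i ^ 3 / (1 - p i))"
proof (induction k)
  case 0
  show ?case unfolding JJ_def NN_def by simp
next
  case (Suc k)
  then show ?case using JJ_step[OF Suc.prems] by simp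
qed

end

theorem theorem1:
  fixes n :: nat and p :: "nat \<Rightarrow> real"
  assumes "\<And>i. i < n \<Longrightarrow> 0 \<le> p i \<and> p i < 1"
    and "(\<Sum>i<n. p i) > 0"
  shows "rel_entropy (bernoulli_sum_pmf n p) (poisson_pmf (\<Sum>i<n. p i))
           \<le> ereal ((1 / (\<Sum>i<n. p i)) * (\<Sum>i<n. p i ^ 3 / (1 - p i)))"
proof -
  define l where "l = (\<Sum>i<n. p i)"
  define P where "P = bernoulli_sum_pmf n p"
  define w where "w = qq p n"
  have l: "l > 0" using assms(2) l_def by simp
  have pw: "pmf P x = w x" for x
    unfolding P_def w_def by (rule pmf_bsum) (use assms(1) in force)
  have w0: "w x \<ge> 0" for x unfolding w_def using qq_nonneg[OF assms(1)] by simp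
  have wm: "w x = 0" if "x > n" for x unfolding w_def using qq_above[OF assms(1) that] by simp
  have w1: "(\<Sum>x\<le>n. w x) = 1" unfolding w_def using qq_sum[OF assms(1)] by simp
  have wz: "w (Suc x) = 0" if "w x = 0" for x unfolding w_def using qq_down[OF assms(1)] that w_def by simp
  have po: "pmf (poisson_pmf l) x = l ^ x / fact x * exp (-l)" for x using l by simp
  have po0: "pmf (poisson_pmf l) x > 0" for x using l po by simp
  have sub: "set_pmf P \<subseteq> {..n}"
  proof
    fix x assume "x \<in> set_pmf P"
    then have "pmf P x \<noteq> 0" by (simp add: set_pmf_eq)
    then show "x \<in> {..n}" using wm pw by (cases "x > n") auto
  qed
  have "rel_entropy P (poisson_pmf l) = ereal (\<Sum>x\<in>set_pmf P. pmf P x * ln (pmf P x / pmf (poisson_pmf l) x))"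
    unfolding rel_entropy_def using po0
    by (simp add: infsum_finite[OF finite_subset[OF sub]] less_imp_neq[symmetric])
  also have "(\<Sum>x\<in>set_pmf P. pmf P x * ln (pmf P x / pmf (poisson_pmf l) x))
      = (\<Sum>x\<in>set_pmf P. w x * ln (w x / (l ^ x / fact x * exp (-l))))"
    by (simp only: pw po)
  also have "\<dots> = (\<Sum>x\<le>n. w x * ln (w x / (l ^ x / fact x * exp (-l))))"
  proof (rule sum.mono_neutral_left)
    show "\<forall>i\<in>{..n} - set_pmf P. w i * ln (w i / (l ^ i / fact i * exp (-l))) = 0"
      using pw by (auto simp: set_pmf_eq)
  qed (use sub in auto)
  also have "(\<Sum>x\<le>n. w x * ln (w x / (l ^ x / fact x * exp (-l))))
      \<le> (\<Sum>t\<le>n. (real (Suc t) * w (Suc t) - l * w t)^2 / (l * w t))"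
    by (rule poisson_mlsi[OF l w0 wm w1 wz])
  also have "\<dots> = JJ p n / l"
  proof -
    have J: "JJ p n = (\<Sum>x\<le>n. (NN p n x)^2 / qq p n x)" by (rule JJ_def[OF assms(1)])
    show ?thesis
      unfolding J NN_def[OF assms(1)] w_def l_def sum_divide_distrib
      by (intro sum.cong refl) (simp add: NN_def[OF assms(1)] algebra_simps)
  qed
  also have "JJ p n / l \<le> (\<Sum>i<n. p i ^ 3 / (1 - p i)) / l"
    using JJ_bound[OF assms(1) order.refl] l by (simp add: divide_right_mono)
  finally show ?thesis unfolding P_def l_def by simp
qed

end
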